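(* Let $(\rho_k)_k$ be a real sequence with $\lim_{k\to\infty}\rho_k=0$, and let $(\lambda_k)_k$ be any sequence in $\mathbb{R}\setminus\{0\}$. Then for every $F\in C^*(G)$, $$\lim_{k\to\infty}\|\pi_{\rho_k,\lambda_k}(F)-\pi_{0,\lambda_k}(F)\|=0.$$
   Context: $G$ (Boidol's group) is $\mathbb{R}^4$ with product $(t,x,y,z)\cdot(t',x',y',z')=(t+t',\,e^{t'}x+x',\,e^{-t'}y+y',\,z+z'+\tfrac12(e^{t'}xy'-e^{-t'}x'y))$, Haar measure $dt\,dx\,dy\,dz$, group C*-algebra $C^*(G)$; representations extend to $C^*(G)$ by $\pi(F)=\int_G F(g)\pi(g)dg$. For $\rho\in\mathbb{R},\lambda\neq0$, $\pi_{\rho,\lambda}$ is the unitary representation on $L^2(\mathbb{R})$ given by $\pi_{\rho,\lambda}(t,x,y,z)\xi(u)=e^{t/2}e^{-i\rho t}e^{-i\lambda z}e^{-i\lambda xy/2}e^{i\lambda e^tyu}\xi(e^tu-x)$. *)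

theory Defs
  imports "HOL-Analysis.Analysis"
begin

text \<open>Boidol's group G = R^4, elements written (t,x,y,z); Haar measure = Lebesgue measure
  dt dx dy dz, i.e. lborel on real \<times> real \<times> real \<times> real.\<close>

type_synonym grp = "real \<times> real \<times> real \<times> real"

definition boidol_mult :: "grp \<Rightarrow> grp \<Rightarrow> grp" where
  "boidol_mult = (\<lambda>(t,x,y,z) (t',x',y',z').
     (t + t', exp t' * x + x', exp (- t') * y + y',
      z + z' + (exp t' * x * y' - exp (- t') * x' * y) / 2))"

definition pi_act :: "real \<Rightarrow> real \<Rightarrow> grp \<Rightarrow> (real \<Rightarrow> complex) \<Rightarrow> real \<Rightarrow> complex" where
  "pi_act \<rho> lam g \<xi> u = (case g of (t,x,y,z) \<Rightarrow>
     complex_of_real (exp (t / 2))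
     * cis (- \<rho> * t - lam * z - lam * x * y / 2 + lam * exp t * y * u)
     * \<xi> (exp t * u - x))"

definition pi_op :: "real \<Rightarrow> real \<Rightarrow> (grp \<Rightarrow> complex) \<Rightarrow> (real \<Rightarrow> complex) \<Rightarrow> real \<Rightarrow> complex" where
  "pi_op \<rho> lam F \<xi> u = (\<integral>g. F g * pi_act \<rho> lam g \<xi> u \<partial>lborel)"

definition square_integrable :: "(real \<Rightarrow> complex) \<Rightarrow> bool" where
  "square_integrable \<xi> \<longleftrightarrow> \<xi> \<in> borel_measurable lborel \<and> integrable lborel (\<lambda>u. (cmod (\<xi> u))\<^sup>2)"

definition l2norm :: "(real \<Rightarrow> complex) \<Rightarrow> real" where
  "l2norm \<xi> = sqrt (\<integral>u. (cmod (\<xi> u))\<^sup>2 \<partial>lborel)"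

definition op_norm :: "((real \<Rightarrow> complex) \<Rightarrow> (real \<Rightarrow> complex)) \<Rightarrow> real" where
  "op_norm T = Sup ((\<lambda>\<xi>. l2norm (T \<xi>)) ` {\<xi>. square_integrable \<xi> \<and> l2norm \<xi> \<le> 1})"

end

theory Submission
  imports Defs
begin

definition phs :: "real \<Rightarrow> grp \<Rightarrow> real \<Rightarrow> real" where
  "phs lam g u = - lam * snd (snd (snd g)) - lam * fst (snd g) * fst (snd (snd g)) / 2 + lam * exp (fst g) * fst (snd (snd g)) * u"

lemma pi_act_alt: "pi_act \<rho> lam g \<xi> u =
  complex_of_real (exp (fst g / 2)) * cis (- \<rho> * fst g + phs lam g u)
  * \<xi> (exp (fst g) * u - fst (snd g))"
proof (cases g)
  case (fields t x y z)
  have "- \<rho> * t - lam * z - lam * x * y / 2 + lam * exp t * y * u = - \<rho> * t + phs lam g u"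
    by (simp add: phs_def fields)
  then show ?thesis by (simp only: pi_act_def fields prod.case fst_conv snd_conv)
qed

lemma pi_act_rho: "pi_act \<rho> lam g \<xi> u = cis (- \<rho> * fst g) * pi_act 0 lam g \<xi> u"
proof -
  have "cis (- \<rho> * fst g + phs lam g u) = cis (- \<rho> * fst g) * cis (- 0 * fst g + phs lam g u)"
    by (simp add: cis_mult)
  then show ?thesis unfolding pi_act_alt[of \<rho>] pi_act_alt[of 0] by (simp only: mult_ac)
qed

lemma norm_pi_act: "cmod (pi_act \<rho> lam g \<xi> u) = exp (fst g / 2) * cmod (\<xi> (exp (fst g) * u - fst (snd g)))"
  by (simp add: pi_act_alt norm_mult)

lemma pi_op_rho: "pi_op \<rho> lam F = pi_op 0 lam (\<lambda>g. F g * cis (- \<rho> * fst g))"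
  by (intro ext) (simp add: pi_op_def pi_act_rho[of \<rho>] mult_ac)

lemma meas_pair: "f \<in> borel_measurable borel \<Longrightarrow> f \<in> borel_measurable (lborel \<Otimes>\<^sub>M (lborel :: grp measure))"
  by (simp add: lborel_prod)

lemma meas_int:
  assumes "\<xi> \<in> borel_measurable borel" "F \<in> borel_measurable borel"
  shows "(\<lambda>(u::real, g::grp). F g * pi_act \<rho> lam g \<xi> u) \<in> borel_measurable (lborel \<Otimes>\<^sub>M lborel)"
proof (rule meas_pair)
  have e: "(\<lambda>p::real\<times>grp. exp (fst (snd p)) * fst p - fst (snd (snd p))) \<in> borel_measurable borel"
    by (intro borel_measurable_continuous_onI continuous_intros)
  have x: "(\<lambda>p::real\<times>grp. \<xi> (exp (fst (snd p)) * fst p - fst (snd (snd p)))) \<in> borel_measurable borel"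
    using measurable_compose[OF e assms(1)] by (simp add: o_def)
  have c: "(\<lambda>p::real\<times>grp. complex_of_real (exp (fst (snd p) / 2)) * cis (- \<rho> * fst (snd p) + phs lam (snd p) (fst p))) \<in> borel_measurable borel"
    unfolding phs_def by (intro borel_measurable_continuous_onI continuous_intros) auto
  have f: "(\<lambda>p::real\<times>grp. F (snd p)) \<in> borel_measurable borel"
  proof -
    have "snd \<in> measurable (borel::(real\<times>grp) measure) borel"
      by (intro borel_measurable_continuous_onI continuous_intros)
    from measurable_compose[OF this assms(2)] show ?thesis by (simp add: o_def)
  qed
  show "(\<lambda>(u::real, g::grp). F g * pi_act \<rho> lam g \<xi> u) \<in> borel_measurable borel"
    unfolding pi_act_alt split_beta using borel_measurable_times[OF f borel_measurable_times[OF c x]]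
    by (simp add: mult_ac)
qed

definition kk :: "(real \<Rightarrow> complex) \<Rightarrow> grp \<Rightarrow> real \<Rightarrow> real" where
  "kk \<xi> g u = exp (fst g / 2) * cmod (\<xi> (exp (fst g) * u - fst (snd g)))"

lemma kk_nonneg: "kk \<xi> g u \<ge> 0" by (simp add: kk_def)

lemma kk_eq: "kk \<xi> g u = cmod (1 * pi_act \<rho> lam g \<xi> u)"
  by (simp add: kk_def norm_pi_act)

lemma meas_kk:
  assumes "\<xi> \<in> borel_measurable borel"
  shows "(\<lambda>(u::real, g::grp). kk \<xi> g u) \<in> borel_measurable (lborel \<Otimes>\<^sub>M lborel)"
proof -
  have "(\<lambda>(u::real, g::grp). (\<lambda>_. 1) g * pi_act 0 0 g \<xi> u) \<in> borel_measurable (lborel \<Otimes>\<^sub>M lborel)"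
    by (rule meas_int[OF assms]) simp
  from measurable_compose[OF this borel_measurable_norm] show ?thesis
    by (simp add: kk_eq[of _ _ _ 0 0] split_beta o_def)
qed

lemma meas_Fkk:
  assumes "\<xi> \<in> borel_measurable borel" "F \<in> borel_measurable borel"
  shows "(\<lambda>(u::real, g::grp). ennreal (cmod (F g) * kk \<xi> g u)) \<in> borel_measurable (lborel \<Otimes>\<^sub>M lborel)"
    and "(\<lambda>(u::real, g::grp). ennreal (cmod (F g) * (kk \<xi> g u)^2)) \<in> borel_measurable (lborel \<Otimes>\<^sub>M lborel)"
proof -
  have f: "(\<lambda>p::real\<times>grp. F (snd p)) \<in> borel_measurable (lborel \<Otimes>\<^sub>M lborel)"
    using assms(2) by measurable
  note k = meas_kk[OF assms(1)]
  show "(\<lambda>(u::real, g::grp). ennreal (cmod (F g) * kk \<xi> g u)) \<in> borel_measurable (lborel \<Otimes>\<^sub>M lborel)"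
    using borel_measurable_times[OF measurable_compose[OF f borel_measurable_norm] k] by (simp add: split_beta o_def)
  show "(\<lambda>(u::real, g::grp). ennreal (cmod (F g) * (kk \<xi> g u)^2)) \<in> borel_measurable (lborel \<Otimes>\<^sub>M lborel)"
    using borel_measurable_times[OF measurable_compose[OF f borel_measurable_norm] borel_measurable_power[OF k, of 2]] by (simp add: split_beta o_def)
qed

lemma inner_kk:
  assumes "\<xi> \<in> borel_measurable borel"
  shows "(\<integral>\<^sup>+u. ennreal ((kk \<xi> g u)^2) \<partial>lborel) = (\<integral>\<^sup>+v. ennreal ((cmod (\<xi> v))^2) \<partial>lborel)"
proof -
  have m: "(\<lambda>v. ennreal ((cmod (\<xi> v))^2)) \<in> borel_measurable borel" using assms by measurable
  have "(\<integral>\<^sup>+v. ennreal ((cmod (\<xi> v))^2) \<partial>lborel) = \<bar>exp (fst g)\<bar> * (\<integral>\<^sup>+u. ennreal ((cmod (\<xi> (- fst (snd g) + exp (fst g) * u)))^2) \<partial>lborel)"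
    by (rule nn_integral_real_affine[OF m]) simp
  also have "\<dots> = (\<integral>\<^sup>+u. ennreal (exp (fst g)) * ennreal ((cmod (\<xi> (- fst (snd g) + exp (fst g) * u)))^2) \<partial>lborel)"
  proof (subst nn_integral_cmult)
    have a: "(\<lambda>u. - fst (snd g) + exp (fst g) * u) \<in> borel_measurable borel" by measurable
    show "(\<lambda>u. ennreal ((cmod (\<xi> (- fst (snd g) + exp (fst g) * u)))^2)) \<in> borel_measurable lborel"
      using measurable_compose[OF a m] by (simp add: o_def)
  qed simp
  also have "\<dots> = (\<integral>\<^sup>+u. ennreal ((kk \<xi> g u)^2) \<partial>lborel)"
    by (intro nn_integral_cong) (simp add: kk_def power_mult_distrib ennreal_mult[symmetric] exp_double[symmetric])
  finally show ?thesis ..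
qed

lemma key:
  assumes xm: "\<xi> \<in> borel_measurable borel" and fm: "F \<in> borel_measurable borel"
  shows "(\<integral>\<^sup>+u. (\<integral>\<^sup>+g. ennreal (cmod (F g) * kk \<xi> g u) \<partial>lborel)^2 \<partial>lborel)
     \<le> (\<integral>\<^sup>+g. ennreal (cmod (F g)) \<partial>lborel)^2 * (\<integral>\<^sup>+v. ennreal ((cmod (\<xi> v))^2) \<partial>lborel)"
proof -
  define A where "A = (\<integral>\<^sup>+g. ennreal (cmod (F g)) \<partial>(lborel::grp measure))"
  define X where "X = (\<integral>\<^sup>+v. ennreal ((cmod (\<xi> v))^2) \<partial>lborel)"
  note m1 = meas_Fkk(1)[OF xm fm] and m2 = meas_Fkk(2)[OF xm fm]
  have cs: "(\<integral>\<^sup>+g. ennreal (cmod (F g) * kk \<xi> g u) \<partial>lborel)^2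
      \<le> A * (\<integral>\<^sup>+g. ennreal (cmod (F g) * (kk \<xi> g u)^2) \<partial>lborel)" for u
  proof -
    have ma: "(\<lambda>g. ennreal (sqrt (cmod (F g)))) \<in> borel_measurable lborel"
      using fm by measurable
    have mk: "(\<lambda>g. kk \<xi> g u) \<in> borel_measurable lborel"
      using measurable_Pair2[OF meas_kk[OF xm], of u] by simp
    have mb: "(\<lambda>g. ennreal (sqrt (cmod (F g)) * kk \<xi> g u)) \<in> borel_measurable lborel"
      using ma mk fm by measurable
    from Cauchy_Schwarz_nn_integral[OF ma mb] show ?thesis
      by (simp add: A_def ennreal_mult[symmetric] kk_nonneg ennreal_power power_mult_distrib mult.assoc[symmetric])
  qed
  have "(\<integral>\<^sup>+u. (\<integral>\<^sup>+g. ennreal (cmod (F g) * kk \<xi> g u) \<partial>lborel)^2 \<partial>lborel)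
      \<le> (\<integral>\<^sup>+u. A * (\<integral>\<^sup>+g. ennreal (cmod (F g) * (kk \<xi> g u)^2) \<partial>lborel) \<partial>lborel)"
    by (intro nn_integral_mono cs)
  also have "\<dots> = A * (\<integral>\<^sup>+u. (\<integral>\<^sup>+g. ennreal (cmod (F g) * (kk \<xi> g u)^2) \<partial>lborel) \<partial>lborel)"
    by (rule nn_integral_cmult) (rule lborel.borel_measurable_nn_integral[OF m2])
  also have "(\<integral>\<^sup>+u. (\<integral>\<^sup>+g. ennreal (cmod (F g) * (kk \<xi> g u)^2) \<partial>lborel) \<partial>lborel)
     = (\<integral>\<^sup>+g. (\<integral>\<^sup>+u. ennreal (cmod (F g) * (kk \<xi> g u)^2) \<partial>lborel) \<partial>lborel)"
    by (rule lborel_pair.Fubini'[OF m2, symmetric])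
  also have "\<dots> = (\<integral>\<^sup>+g. ennreal (cmod (F g)) * X \<partial>lborel)"
  proof (intro nn_integral_cong)
    fix g :: grp
    have mk: "(\<lambda>u. ennreal ((kk \<xi> g u)^2)) \<in> borel_measurable lborel"
      using measurable_Pair1[OF meas_kk[OF xm], of g] by simp
    have "(\<integral>\<^sup>+u. ennreal (cmod (F g) * (kk \<xi> g u)^2) \<partial>lborel) = (\<integral>\<^sup>+u. ennreal (cmod (F g)) * ennreal ((kk \<xi> g u)^2) \<partial>lborel)"
      by (simp add: ennreal_mult)
    also have "\<dots> = ennreal (cmod (F g)) * X"
      by (simp add: nn_integral_cmult[OF mk] inner_kk[OF xm] X_def)
    finally show "(\<integral>\<^sup>+u. ennreal (cmod (F g) * (kk \<xi> g u)^2) \<partial>lborel) = ennreal (cmod (F g)) * X" .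
  qed
  also have "\<dots> = A * X"
    by (subst nn_integral_multc) (use fm in \<open>auto simp: A_def\<close>)
  finally show ?thesis by (simp add: A_def X_def power2_eq_square mult.assoc)
qed

lemma norm_integrand: "cmod (F g * pi_act \<rho> lam g \<xi> u) = cmod (F g) * kk \<xi> g u"
  by (simp add: norm_mult kk_def norm_pi_act)

lemma pi_bound:
  assumes Fi: "integrable lborel F" and xs: "square_integrable \<xi>"
  shows "AE u in lborel. integrable lborel (\<lambda>g. F g * pi_act \<rho> lam g \<xi> u)"
    and "square_integrable (pi_op \<rho> lam F \<xi>)"
    and "(\<integral>u. (cmod (pi_op \<rho> lam F \<xi> u))^2 \<partial>lborel) \<le> (\<integral>g. cmod (F g) \<partial>lborel)^2 * (\<integral>u. (cmod (\<xi> u))^2 \<partial>lborel)"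
proof -
  have fm: "F \<in> borel_measurable borel" using Fi by simp
  have xm: "\<xi> \<in> borel_measurable borel" and xi: "integrable lborel (\<lambda>u. (cmod (\<xi> u))\<^sup>2)"
    using xs by (auto simp: square_integrable_def)
  define N1 where "N1 = (\<integral>g. cmod (F g) \<partial>lborel)"
  define X where "X = (\<integral>u. (cmod (\<xi> u))^2 \<partial>lborel)"
  have N1e: "(\<integral>\<^sup>+g. ennreal (cmod (F g)) \<partial>lborel) = ennreal N1"
    unfolding N1_def by (rule nn_integral_eq_integral) (use Fi in auto)
  have Xe: "(\<integral>\<^sup>+v. ennreal ((cmod (\<xi> v))^2) \<partial>lborel) = ennreal X"
    unfolding X_def by (rule nn_integral_eq_integral) (use xi in auto)
  have N1p: "N1 \<ge> 0" "X \<ge> 0" unfolding N1_def X_def by auto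
  define I where "I u = (\<integral>\<^sup>+g. ennreal (cmod (F g) * kk \<xi> g u) \<partial>lborel)" for u
  have Im: "I \<in> borel_measurable lborel"
    unfolding I_def by (rule lborel.borel_measurable_nn_integral[OF meas_Fkk(1)[OF xm fm]])
  have B: "(\<integral>\<^sup>+u. (I u)^2 \<partial>lborel) \<le> ennreal (N1^2 * X)"
    using key[OF xm fm] unfolding I_def N1e Xe using N1p by (simp add: ennreal_mult ennreal_power)
  have Im2: "(\<lambda>u. (I u)^2) \<in> borel_measurable lborel" using Im by measurable
  have "AE u in lborel. (I u)^2 \<noteq> \<infinity>"
    by (rule nn_integral_PInf_AE[OF Im2]) (use B in \<open>auto simp: top_unique\<close>)
  then have AEI: "AE u in lborel. I u \<noteq> \<infinity>"
    by eventually_elim (simp add: power_eq_top_ennreal)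
  have mi: "(\<lambda>(u::real, g::grp). F g * pi_act \<rho> lam g \<xi> u) \<in> borel_measurable (lborel \<Otimes>\<^sub>M lborel)"
    by (rule meas_int[OF xm fm])
  show AEint: "AE u in lborel. integrable lborel (\<lambda>g. F g * pi_act \<rho> lam g \<xi> u)"
    using AEI
  proof eventually_elim
    case (elim u)
    show ?case
    proof (rule integrableI_bounded)
      show "(\<lambda>g. F g * pi_act \<rho> lam g \<xi> u) \<in> borel_measurable lborel"
        using measurable_Pair2[OF mi, of u] by simp
      show "(\<integral>\<^sup>+g. ennreal (norm (F g * pi_act \<rho> lam g \<xi> u)) \<partial>lborel) < \<infinity>"
        using elim by (simp add: norm_integrand I_def top.not_eq_extremum)
    qed
  qed
  have pm: "pi_op \<rho> lam F \<xi> \<in> borel_measurable lborel"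
    unfolding pi_op_def[abs_def] using lborel.borel_measurable_lebesgue_integral[OF mi] by simp
  have ptw: "ennreal ((cmod (pi_op \<rho> lam F \<xi> u))^2) \<le> (I u)^2" for u
  proof -
    have "ennreal (cmod (pi_op \<rho> lam F \<xi> u)) \<le> I u"
    proof (cases "integrable lborel (\<lambda>g. F g * pi_act \<rho> lam g \<xi> u)")
      case True
      from integral_norm_bound_ennreal[OF True] show ?thesis
        by (simp add: pi_op_def I_def norm_integrand)
    next
      case False
      then show ?thesis by (simp add: pi_op_def not_integrable_integral_eq)
    qed
    then have "ennreal (cmod (pi_op \<rho> lam F \<xi> u)) ^ 2 \<le> (I u)^2"
      by (rule power_mono) simp
    then show ?thesis by (simp add: ennreal_power)
  qed
  have P: "(\<integral>\<^sup>+u. ennreal ((cmod (pi_op \<rho> lam F \<xi> u))^2) \<partial>lborel) \<le> ennreal (N1^2 * X)"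
    using nn_integral_mono[OF ptw] B by (rule order_trans)
  have pi: "integrable lborel (\<lambda>u. (cmod (pi_op \<rho> lam F \<xi> u))^2)"
  proof (rule integrableI_bounded)
    show "(\<lambda>u. (cmod (pi_op \<rho> lam F \<xi> u))^2) \<in> borel_measurable lborel" using pm by measurable
    show "(\<integral>\<^sup>+u. ennreal (norm ((cmod (pi_op \<rho> lam F \<xi> u))^2)) \<partial>lborel) < \<infinity>"
      using P by (simp add: order_le_less_trans)
  qed
  then show "square_integrable (pi_op \<rho> lam F \<xi>)"
    using pm by (simp add: square_integrable_def)
  have "ennreal (\<integral>u. (cmod (pi_op \<rho> lam F \<xi> u))^2 \<partial>lborel) = (\<integral>\<^sup>+u. ennreal ((cmod (pi_op \<rho> lam F \<xi> u))^2) \<partial>lborel)"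
    by (rule nn_integral_eq_integral[symmetric]) (use pi in auto)
  with P have "ennreal (\<integral>u. (cmod (pi_op \<rho> lam F \<xi> u))^2 \<partial>lborel) \<le> ennreal (N1^2 * X)" by simp
  then show "(\<integral>u. (cmod (pi_op \<rho> lam F \<xi> u))^2 \<partial>lborel) \<le> (\<integral>g. cmod (F g) \<partial>lborel)^2 * (\<integral>u. (cmod (\<xi> u))^2 \<partial>lborel)"
    using N1p by (simp add: N1_def X_def)
qed

lemma l2norm_nonneg: "l2norm f \<ge> 0"
  by (simp add: l2norm_def)

lemma l2norm_sq: "(l2norm f)^2 = (\<integral>u. (cmod (f u))^2 \<partial>lborel)"
  by (simp add: l2norm_def)

lemma si_meas: "square_integrable f \<Longrightarrow> f \<in> borel_measurable borel"
  by (simp add: square_integrable_def)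

lemma l2norm_cong_AE:
  assumes "f \<in> borel_measurable borel" "g \<in> borel_measurable borel" "AE u in lborel. f u = g u"
  shows "l2norm f = l2norm g"
proof -
  have "(\<integral>u. (cmod (f u))^2 \<partial>lborel) = (\<integral>u. (cmod (g u))^2 \<partial>lborel)"
    by (rule integral_cong_AE) (use assms in \<open>auto elim: AE_mp\<close>)
  then show ?thesis by (simp add: l2norm_def)
qed

lemma si_neg: "square_integrable f \<Longrightarrow> square_integrable (\<lambda>u. - f u) \<and> l2norm (\<lambda>u. - f u) = l2norm f"
  by (simp add: square_integrable_def l2norm_def)

lemma sq_ineq:
  fixes p q a b :: real
  assumes "a > 0" "b > 0" "p \<ge> 0" "q \<ge> 0"
  shows "(p + q)^2 \<le> (1 + b / a) * p^2 + (1 + a / b) * q^2"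
proof -
  have "0 \<le> (b * p - a * q)^2 / (a * b)" using assms by simp
  also have "(b * p - a * q)^2 / (a * b) = (b / a) * p^2 + (a / b) * q^2 - 2 * p * q"
    using assms by (simp add: field_simps power2_eq_square)
  finally show ?thesis by (simp add: power2_eq_square algebra_simps)
qed

lemma l2_tri:
  assumes f: "square_integrable f" and g: "square_integrable g"
  shows "square_integrable (\<lambda>u. f u + g u)" and "l2norm (\<lambda>u. f u + g u) \<le> l2norm f + l2norm g"
proof -
  have fm: "f \<in> borel_measurable borel" and gm: "g \<in> borel_measurable borel"
    and fi: "integrable lborel (\<lambda>u. (cmod (f u))\<^sup>2)" and gi: "integrable lborel (\<lambda>u. (cmod (g u))\<^sup>2)"
    using f g by (auto simp: square_integrable_def)
  have pt: "(cmod (f u + g u))^2 \<le> (1 + b / a) * (cmod (f u))^2 + (1 + a / b) * (cmod (g u))^2"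
    if "a > 0" "b > 0" for a b u
  proof -
    have "(cmod (f u + g u))^2 \<le> (cmod (f u) + cmod (g u))^2"
      by (intro power_mono norm_triangle_ineq) simp
    also have "\<dots> \<le> (1 + b / a) * (cmod (f u))^2 + (1 + a / b) * (cmod (g u))^2" by (rule sq_ineq) (use that in auto)
    finally show ?thesis .
  qed
  have hm: "(\<lambda>u. (cmod (f u + g u))^2) \<in> borel_measurable lborel" using fm gm by measurable
  have hi: "integrable lborel (\<lambda>u. (cmod (f u + g u))^2)"
  proof (rule Bochner_Integration.integrable_bound[OF _ hm])
    show "integrable lborel (\<lambda>u. (1 + 1 / 1) * (cmod (f u))^2 + (1 + 1 / 1) * (cmod (g u))^2)"
      by (rule Bochner_Integration.integrable_add; rule Bochner_Integration.integrable_mult_right; simp only: fi gi)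
    show "AE u in lborel. norm ((cmod (f u + g u))^2) \<le> norm ((1 + 1 / 1) * (cmod (f u))^2 + (1 + 1 / 1) * (cmod (g u))^2)"
    proof (rule AE_I2)
      fix u
      have "(cmod (f u + g u))^2 \<le> (1 + 1 / 1) * (cmod (f u))^2 + (1 + 1 / 1) * (cmod (g u))^2"
        by (rule pt) simp_all
      moreover have "0 \<le> (1 + 1 / 1) * (cmod (f u))^2 + (1 + 1 / 1) * (cmod (g u))^2"
        by (intro add_nonneg_nonneg mult_nonneg_nonneg) simp_all
      ultimately show "norm ((cmod (f u + g u))^2) \<le> norm ((1 + 1 / 1) * (cmod (f u))^2 + (1 + 1 / 1) * (cmod (g u))^2)"
        by (simp only: real_norm_def abs_of_nonneg zero_le_power2)
    qed
  qed
  show "square_integrable (\<lambda>u. f u + g u)"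
    using hi fm gm by (simp add: square_integrable_def)
  define A where "A = l2norm f"
  define B where "B = l2norm g"
  have A0: "A \<ge> 0" "B \<ge> 0" by (simp_all add: A_def B_def l2norm_nonneg)
  show "l2norm (\<lambda>u. f u + g u) \<le> l2norm f + l2norm g"
  proof (rule field_le_epsilon)
    fix e :: real assume e: "e > 0"
    define a where "a = A + e / 2"
    define b where "b = B + e / 2"
    have ab: "a > 0" "b > 0" using A0 e by (simp_all add: a_def b_def)
    have "(l2norm (\<lambda>u. f u + g u))^2 = (\<integral>u. (cmod (f u + g u))^2 \<partial>lborel)"
      by (rule l2norm_sq)
    also have "\<dots> \<le> (\<integral>u. (1 + b / a) * (cmod (f u))^2 + (1 + a / b) * (cmod (g u))^2 \<partial>lborel)"
      by (rule integral_mono[OF hi], rule Bochner_Integration.integrable_add, (rule Bochner_Integration.integrable_mult_right, rule fi), (rule Bochner_Integration.integrable_mult_right, rule gi), rule pt[OF ab])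
    also have "\<dots> = (1 + b / a) * A^2 + (1 + a / b) * B^2"
      by (simp only: Bochner_Integration.integral_add Bochner_Integration.integrable_mult_right fi gi Bochner_Integration.integral_mult_right A_def B_def l2norm_sq)
    also have "\<dots> \<le> (1 + b / a) * a^2 + (1 + a / b) * b^2"
    proof -
      have "A \<le> a" "B \<le> b" using e by (simp_all add: a_def b_def)
      then have "A^2 \<le> a^2" "B^2 \<le> b^2" using A0 by (auto intro: power_mono)
      moreover have "0 \<le> 1 + b / a" "0 \<le> 1 + a / b" using ab by (simp_all add: add_nonneg_nonneg)
      ultimately show ?thesis by (meson add_mono mult_left_mono)
    qed
    also have "\<dots> = (a + b)^2"
      using ab by (simp add: field_simps power2_eq_square)
    finally have "l2norm (\<lambda>u. f u + g u) \<le> a + b"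
      by (rule power2_le_imp_le) (use ab in linarith)
    then show "l2norm (\<lambda>u. f u + g u) \<le> l2norm f + l2norm g + e"
      unfolding a_def b_def A_def B_def by linarith
  qed
qed

lemma Fc_int:
  assumes "integrable lborel F"
  shows "integrable lborel (\<lambda>g::grp. F g * cis (a * fst g))"
proof (rule Bochner_Integration.integrable_bound[OF assms])
  have fm: "F \<in> borel_measurable borel" using assms by simp
  have "(\<lambda>g::grp. cis (a * fst g)) \<in> borel_measurable borel"
    by (intro borel_measurable_continuous_onI continuous_intros)
  then show "(\<lambda>g::grp. F g * cis (a * fst g)) \<in> borel_measurable lborel"
    using borel_measurable_times[OF fm] by simp
  show "AE g in lborel. norm (F g * cis (a * fst g)) \<le> norm (F g)"
    by (simp add: norm_mult)
qed

lemma pi_lin: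
  assumes "integrable lborel F1" "integrable lborel F2" "square_integrable \<xi>"
  shows "AE u in lborel. pi_op \<rho> lam (\<lambda>g. F1 g - F2 g) \<xi> u = pi_op \<rho> lam F1 \<xi> u - pi_op \<rho> lam F2 \<xi> u"
  using pi_bound(1)[OF assms(1,3), of \<rho> lam] pi_bound(1)[OF assms(2,3), of \<rho> lam]
proof eventually_elim
  case (elim u)
  then show ?case
    by (simp add: pi_op_def left_diff_distrib Bochner_Integration.integral_diff)
qed

definition N1 :: "(grp \<Rightarrow> complex) \<Rightarrow> real" where
  "N1 F = (\<integral>g. cmod (F g) \<partial>lborel)"

lemma N1_nonneg: "N1 F \<ge> 0" by (simp add: N1_def)

lemma pi_si:
  assumes "integrable lborel F" "square_integrable \<xi>"
  shows "square_integrable (pi_op \<rho> lam F \<xi>)" "l2norm (pi_op \<rho> lam F \<xi>) \<le> N1 F * l2norm \<xi>"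
proof -
  show "square_integrable (pi_op \<rho> lam F \<xi>)" by (rule pi_bound(2)[OF assms])
  have "(l2norm (pi_op \<rho> lam F \<xi>))^2 \<le> (N1 F * l2norm \<xi>)^2"
    using pi_bound(3)[OF assms, of \<rho> lam] by (simp add: l2norm_sq power_mult_distrib N1_def)
  then show "l2norm (pi_op \<rho> lam F \<xi>) \<le> N1 F * l2norm \<xi>"
    by (rule power2_le_imp_le) (simp add: N1_nonneg l2norm_nonneg)
qed

lemma si_zero: "square_integrable (\<lambda>_. 0)" "l2norm (\<lambda>_. 0) = 0"
  by (simp_all add: square_integrable_def l2norm_def)

lemma opn_ge:
  assumes "\<And>\<xi>. square_integrable \<xi> \<Longrightarrow> l2norm \<xi> \<le> 1 \<Longrightarrow> l2norm (T \<xi>) \<le> B"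
    and "square_integrable \<xi>" "l2norm \<xi> \<le> 1"
  shows "l2norm (T \<xi>) \<le> op_norm T"
  unfolding op_norm_def
  by (rule cSUP_upper) (use assms in \<open>auto intro!: bdd_aboveI2\<close>)

lemma opn_le:
  assumes "\<And>\<xi>. square_integrable \<xi> \<Longrightarrow> l2norm \<xi> \<le> 1 \<Longrightarrow> l2norm (T \<xi>) \<le> B"
  shows "op_norm T \<le> B"
  unfolding op_norm_def
  by (rule cSUP_least) (use assms si_zero in auto)

lemma opn_nonneg:
  assumes "\<And>\<xi>. square_integrable \<xi> \<Longrightarrow> l2norm \<xi> \<le> 1 \<Longrightarrow> l2norm (T \<xi>) \<le> B"
  shows "0 \<le> op_norm T"
  using opn_ge[OF assms si_zero(1)] l2norm_nonneg[of "T (\<lambda>_. 0)"] si_zero(2) by fastforce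

lemma D_props:
  assumes F: "integrable lborel F" and xs: "square_integrable \<xi>"
  shows "square_integrable (\<lambda>u. pi_op \<rho> lam F \<xi> u - pi_op 0 lam F \<xi> u)"
    and "l2norm (\<lambda>u. pi_op \<rho> lam F \<xi> u - pi_op 0 lam F \<xi> u)
         \<le> N1 (\<lambda>g. F g * cis (- \<rho> * fst g) - F g) * l2norm \<xi>"
proof -
  have Fc: "integrable lborel (\<lambda>g. F g * cis (- \<rho> * fst g))" by (rule Fc_int[OF F])
  have s1: "square_integrable (pi_op \<rho> lam F \<xi>)" "square_integrable (pi_op 0 lam F \<xi>)"
    using pi_si(1)[OF F xs] by auto
  have e: "(\<lambda>u. pi_op \<rho> lam F \<xi> u - pi_op 0 lam F \<xi> u) = (\<lambda>u. pi_op \<rho> lam F \<xi> u + (- pi_op 0 lam F \<xi> u))"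
    by simp
  show si: "square_integrable (\<lambda>u. pi_op \<rho> lam F \<xi> u - pi_op 0 lam F \<xi> u)"
    unfolding e by (rule l2_tri(1)[OF s1(1) conjunct1[OF si_neg[OF s1(2)]]])
  have ae: "AE u in lborel. pi_op 0 lam (\<lambda>g. F g * cis (- \<rho> * fst g) - F g) \<xi> u
      = pi_op \<rho> lam F \<xi> u - pi_op 0 lam F \<xi> u"
    using pi_lin[OF Fc F xs, of 0 lam] by (simp add: pi_op_rho[of \<rho>])
  have "l2norm (\<lambda>u. pi_op \<rho> lam F \<xi> u - pi_op 0 lam F \<xi> u) = l2norm (pi_op 0 lam (\<lambda>g. F g * cis (- \<rho> * fst g) - F g) \<xi>)"
    by (rule l2norm_cong_AE[OF si_meas[OF si] si_meas[OF pi_si(1)]]) (use ae Fc F xs in \<open>auto elim: AE_mp\<close>)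
  also have "\<dots> \<le> N1 (\<lambda>g. F g * cis (- \<rho> * fst g) - F g) * l2norm \<xi>"
    by (rule pi_si(2)) (use Fc F xs in auto)
  finally show "l2norm (\<lambda>u. pi_op \<rho> lam F \<xi> u - pi_op 0 lam F \<xi> u)
         \<le> N1 (\<lambda>g. F g * cis (- \<rho> * fst g) - F g) * l2norm \<xi>" .
qed

lemma D_cauchy:
  assumes F1: "integrable lborel F1" and F2: "integrable lborel F2" and xs: "square_integrable \<xi>"
  shows "l2norm (\<lambda>u. pi_op \<rho> lam F1 \<xi> u - pi_op 0 lam F1 \<xi> u)
    \<le> l2norm (\<lambda>u. pi_op \<rho> lam F2 \<xi> u - pi_op 0 lam F2 \<xi> u)
      + l2norm (pi_op \<rho> lam (\<lambda>g. F1 g - F2 g) \<xi>) + l2norm (pi_op 0 lam (\<lambda>g. F1 g - F2 g) \<xi>)"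
proof -
  have F12: "integrable lborel (\<lambda>g. F1 g - F2 g)" using F1 F2 by simp
  define d2 where "d2 = (\<lambda>u. pi_op \<rho> lam F2 \<xi> u - pi_op 0 lam F2 \<xi> u)"
  define p where "p = pi_op \<rho> lam (\<lambda>g. F1 g - F2 g) \<xi>"
  define q where "q = pi_op 0 lam (\<lambda>g. F1 g - F2 g) \<xi>"
  have sd2: "square_integrable d2" unfolding d2_def by (rule D_props(1)[OF F2 xs])
  have sp: "square_integrable p" unfolding p_def by (rule pi_si(1)[OF F12 xs])
  have sq: "square_integrable q" unfolding q_def by (rule pi_si(1)[OF F12 xs])
  note nq = si_neg[OF sq]
  have s1: "square_integrable (\<lambda>u. d2 u + p u)" by (rule l2_tri(1)[OF sd2 sp])
  have s2: "square_integrable (\<lambda>u. (d2 u + p u) + (- q u))" by (rule l2_tri(1)[OF s1 conjunct1[OF nq]])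
  have sD: "square_integrable (\<lambda>u. pi_op \<rho> lam F1 \<xi> u - pi_op 0 lam F1 \<xi> u)" by (rule D_props(1)[OF F1 xs])
  have ae: "AE u in lborel. pi_op \<rho> lam F1 \<xi> u - pi_op 0 lam F1 \<xi> u = (d2 u + p u) + (- q u)"
    using pi_lin[OF F1 F2 xs, of \<rho> lam] pi_lin[OF F1 F2 xs, of 0 lam]
    by eventually_elim (simp add: d2_def p_def q_def)
  have "l2norm (\<lambda>u. pi_op \<rho> lam F1 \<xi> u - pi_op 0 lam F1 \<xi> u) = l2norm (\<lambda>u. (d2 u + p u) + (- q u))"
    by (rule l2norm_cong_AE[OF si_meas[OF sD] si_meas[OF s2] ae])
  also have "\<dots> \<le> l2norm (\<lambda>u. d2 u + p u) + l2norm (\<lambda>u. - q u)"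
    by (rule l2_tri(2)[OF s1 conjunct1[OF nq]])
  also have "\<dots> \<le> l2norm d2 + l2norm p + l2norm q"
    using l2_tri(2)[OF sd2 sp] nq by simp
  finally show ?thesis by (simp add: d2_def p_def q_def)
qed

lemma bnd_D:
  assumes "integrable lborel F" "square_integrable \<xi>" "l2norm \<xi> \<le> 1"
  shows "l2norm (\<lambda>u. pi_op \<rho> lam F \<xi> u - pi_op 0 lam F \<xi> u) \<le> N1 (\<lambda>g. F g * cis (- \<rho> * fst g) - F g)"
  using D_props(2)[OF assms(1,2), of \<rho> lam] mult_left_le[OF assms(3) N1_nonneg] by (rule order_trans)

lemma bnd_P:
  assumes "integrable lborel F" "square_integrable \<xi>" "l2norm \<xi> \<le> 1"
  shows "l2norm (pi_op \<rho> lam F \<xi>) \<le> N1 F"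
  using pi_si(2)[OF assms(1,2), of \<rho> lam] mult_left_le[OF assms(3) N1_nonneg] by (rule order_trans)

lemma op_D_cauchy:
  assumes F1: "integrable lborel F1" and F2: "integrable lborel F2"
  shows "op_norm (\<lambda>\<xi> u. pi_op \<rho> lam F1 \<xi> u - pi_op 0 lam F1 \<xi> u)
    \<le> op_norm (\<lambda>\<xi> u. pi_op \<rho> lam F2 \<xi> u - pi_op 0 lam F2 \<xi> u)
      + op_norm (pi_op \<rho> lam (\<lambda>g. F1 g - F2 g)) + op_norm (pi_op 0 lam (\<lambda>g. F1 g - F2 g))"
proof (rule opn_le)
  fix \<xi> :: "real \<Rightarrow> complex" assume xs: "square_integrable \<xi>" and x1: "l2norm \<xi> \<le> 1"
  have F12: "integrable lborel (\<lambda>g. F1 g - F2 g)" using F1 F2 by simp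
  have a: "l2norm (\<lambda>u. pi_op \<rho> lam F2 \<xi> u - pi_op 0 lam F2 \<xi> u) \<le> op_norm (\<lambda>\<xi> u. pi_op \<rho> lam F2 \<xi> u - pi_op 0 lam F2 \<xi> u)"
    by (rule opn_ge[where T="\<lambda>\<xi> u. pi_op \<rho> lam F2 \<xi> u - pi_op 0 lam F2 \<xi> u", OF bnd_D[OF F2] xs x1])
  have b: "l2norm (pi_op \<rho> lam (\<lambda>g. F1 g - F2 g) \<xi>) \<le> op_norm (pi_op \<rho> lam (\<lambda>g. F1 g - F2 g))"
    by (rule opn_ge[OF bnd_P[OF F12] xs x1])
  have c: "l2norm (pi_op 0 lam (\<lambda>g. F1 g - F2 g) \<xi>) \<le> op_norm (pi_op 0 lam (\<lambda>g. F1 g - F2 g))"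
    by (rule opn_ge[OF bnd_P[OF F12] xs x1])
  show "l2norm (\<lambda>u. pi_op \<rho> lam F1 \<xi> u - pi_op 0 lam F1 \<xi> u)
    \<le> op_norm (\<lambda>\<xi> u. pi_op \<rho> lam F2 \<xi> u - pi_op 0 lam F2 \<xi> u)
      + op_norm (pi_op \<rho> lam (\<lambda>g. F1 g - F2 g)) + op_norm (pi_op 0 lam (\<lambda>g. F1 g - F2 g))"
    using D_cauchy[OF F1 F2 xs, of \<rho> lam] a b c by linarith
qed

lemma op_D_bound:
  assumes F: "integrable lborel F"
  shows "op_norm (\<lambda>\<xi> u. pi_op \<rho> lam F \<xi> u - pi_op 0 lam F \<xi> u) \<le> N1 (\<lambda>g. F g * cis (- \<rho> * fst g) - F g)"
    and "0 \<le> op_norm (\<lambda>\<xi> u. pi_op \<rho> lam F \<xi> u - pi_op 0 lam F \<xi> u)"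
  by (rule opn_le, rule bnd_D[OF F], assumption+) (rule opn_nonneg, rule bnd_D[OF F], assumption+)

lemma dct:
  assumes F: "integrable lborel F" and r: "\<rho>s \<longlonglongrightarrow> 0"
  shows "(\<lambda>k. N1 (\<lambda>g. F g * cis (- \<rho>s k * fst g) - F g)) \<longlonglongrightarrow> 0"
proof -
  have "(\<lambda>k. \<integral>g. cmod (F g * cis (- \<rho>s k * fst g) - F g) \<partial>lborel) \<longlonglongrightarrow> (\<integral>(g::grp). (\<lambda>_. 0::real) g \<partial>lborel)"
  proof (rule Bochner_Integration.integral_dominated_convergence[where w="\<lambda>g. 2 * cmod (F g)" and f="\<lambda>_. 0" and s="\<lambda>k g. cmod (F g * cis (- \<rho>s k * fst g) - F g)"])
    show "(\<lambda>_. 0::real) \<in> borel_measurable lborel" by simp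
    show "(\<lambda>g. cmod (F g * cis (- \<rho>s k * fst g) - F g)) \<in> borel_measurable lborel" for k
      using Fc_int[OF F, of "- \<rho>s k"] F by measurable
    show "integrable lborel (\<lambda>g. 2 * cmod (F g))" using F by simp
    show "AE g in lborel. (\<lambda>k. cmod (F g * cis (- \<rho>s k * fst g) - F g)) \<longlonglongrightarrow> 0"
    proof (rule AE_I2)
      fix g :: grp
      have "(\<lambda>k. cmod (F g * cis (- \<rho>s k * fst g) - F g)) \<longlonglongrightarrow> cmod (F g * cis (- 0 * fst g) - F g)"
        by (intro tendsto_intros r)
      then show "(\<lambda>k. cmod (F g * cis (- \<rho>s k * fst g) - F g)) \<longlonglongrightarrow> 0" by simp
    qed
    show "AE g in lborel. norm (cmod (F g * cis (- \<rho>s k * fst g) - F g)) \<le> 2 * cmod (F g)" for k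
    proof (rule AE_I2)
      fix g :: grp
      have "cmod (F g * cis (- \<rho>s k * fst g) - F g) \<le> cmod (F g * cis (- \<rho>s k * fst g)) + cmod (F g)"
        by (rule norm_triangle_ineq4)
      then show "norm (cmod (F g * cis (- \<rho>s k * fst g) - F g)) \<le> 2 * cmod (F g)"
        by (simp add: norm_mult)
    qed
  qed
  then show ?thesis by (simp add: N1_def)
qed

theorem lemma4p8:
  fixes \<rho>s lams :: "nat \<Rightarrow> real" and Fs :: "nat \<Rightarrow> grp \<Rightarrow> complex"
  assumes "\<rho>s \<longlonglongrightarrow> 0"
    and "\<And>k. lams k \<noteq> 0"
    and "\<And>n. integrable lborel (Fs n)"
    and "\<forall>\<epsilon>>0. \<exists>N. \<forall>m\<ge>N. \<forall>n\<ge>N. \<forall>\<rho> lam. lam \<noteq> 0 \<longrightarrow>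
           op_norm (pi_op \<rho> lam (\<lambda>g. Fs m g - Fs n g)) < \<epsilon>"
  shows "(\<lambda>k. lim (\<lambda>n. op_norm (\<lambda>\<xi> u. pi_op (\<rho>s k) (lams k) (Fs n) \<xi> u
                                      - pi_op 0 (lams k) (Fs n) \<xi> u))) \<longlonglongrightarrow> 0"
proof -
  define a where "a k n = op_norm (\<lambda>\<xi> u. pi_op (\<rho>s k) (lams k) (Fs n) \<xi> u - pi_op 0 (lams k) (Fs n) \<xi> u)" for k n
  have H: "\<exists>N. \<forall>m\<ge>N. \<forall>n\<ge>N. \<forall>k. \<bar>a k m - a k n\<bar> < 2 * e" if e: "e > 0" for e
  proof -
    obtain N where N: "\<And>m n \<rho> lam. m \<ge> N \<Longrightarrow> n \<ge> N \<Longrightarrow> lam \<noteq> 0 \<Longrightarrow>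
           op_norm (pi_op \<rho> lam (\<lambda>g. Fs m g - Fs n g)) < e"
      using assms(4) e by meson
    have "\<bar>a k m - a k n\<bar> < 2 * e" if "m \<ge> N" "n \<ge> N" for m n k
    proof -
      have 1: "a k m \<le> a k n + op_norm (pi_op (\<rho>s k) (lams k) (\<lambda>g. Fs m g - Fs n g)) + op_norm (pi_op 0 (lams k) (\<lambda>g. Fs m g - Fs n g))"
        unfolding a_def by (rule op_D_cauchy[OF assms(3) assms(3)])
      have 2: "a k n \<le> a k m + op_norm (pi_op (\<rho>s k) (lams k) (\<lambda>g. Fs n g - Fs m g)) + op_norm (pi_op 0 (lams k) (\<lambda>g. Fs n g - Fs m g))"
        unfolding a_def by (rule op_D_cauchy[OF assms(3) assms(3)])
      have 3: "op_norm (pi_op (\<rho>s k) (lams k) (\<lambda>g. Fs m g - Fs n g)) < e" "op_norm (pi_op 0 (lams k) (\<lambda>g. Fs m g - Fs n g)) < e"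
        "op_norm (pi_op (\<rho>s k) (lams k) (\<lambda>g. Fs n g - Fs m g)) < e" "op_norm (pi_op 0 (lams k) (\<lambda>g. Fs n g - Fs m g)) < e"
        using N[OF that assms(2)] N[OF that(2,1) assms(2)] by auto
      show ?thesis using 1 2 3 by (simp add: abs_less_iff)
    qed
    then show ?thesis by blast
  qed
  have conv: "a k \<longlonglongrightarrow> lim (a k)" for k
  proof -
    have "Cauchy (a k)"
    proof (rule CauchyI)
      fix e :: real assume "e > 0"
      then obtain N where "\<forall>m\<ge>N. \<forall>n\<ge>N. \<forall>k. \<bar>a k m - a k n\<bar> < 2 * (e / 2)"
        using H[of "e / 2"] by auto
      then show "\<exists>M. \<forall>m\<ge>M. \<forall>n\<ge>M. norm (a k m - a k n) < e" by auto
    qed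
    then show ?thesis by (simp add: Cauchy_convergent_iff convergent_LIMSEQ_iff)
  qed
  have nonneg: "0 \<le> a k n" for k n
    unfolding a_def by (rule op_D_bound(2)[OF assms(3)])
  have bnd: "a k n \<le> N1 (\<lambda>g. Fs n g * cis (- \<rho>s k * fst g) - Fs n g)" for k n
    unfolding a_def by (rule op_D_bound(1)[OF assms(3)])
  have "(\<lambda>k. lim (a k)) \<longlonglongrightarrow> 0"
  proof (rule LIMSEQ_I)
    fix r :: real assume r: "r > 0"
    obtain N where N: "\<And>m n k. m \<ge> N \<Longrightarrow> n \<ge> N \<Longrightarrow> \<bar>a k m - a k n\<bar> < 2 * (r / 4)"
      using H[of "r / 4"] r by auto
    obtain K where
      K: "\<And>k. k \<ge> K \<Longrightarrow> norm (N1 (\<lambda>g. Fs N g * cis (- \<rho>s k * fst g) - Fs N g) - 0) < r / 4"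
    proof -
      have "r / 4 > 0" using r by simp
      from LIMSEQ_D[OF dct[OF assms(3)[of N] assms(1)] this] show ?thesis using that by blast
    qed
    have "norm (lim (a k) - 0) < r" if "k \<ge> K" for k
    proof -
      have lo: "0 \<le> lim (a k)"
        by (rule LIMSEQ_le_const[OF conv]) (use nonneg in auto)
      have hi: "lim (a k) \<le> a k N + 2 * (r / 4)"
      proof (rule LIMSEQ_le_const2[OF conv], intro exI allI impI)
        fix n assume "n \<ge> N"
        from N[OF this order_refl, of k] abs_ge_self[of "a k n - a k N"] show "a k n \<le> a k N + 2 * (r / 4)" by linarith
      qed
      have "a k N < r / 4" using bnd[of k N] K[OF that] by simp
      then show ?thesis using lo hi by simp
    qed
    then show "\<exists>no. \<forall>k\<ge>no. norm (lim (a k) - 0) < r" by blast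
  qed
  then show ?thesis unfolding a_def[abs_def] .
qed

end
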